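(* Let $n,m,k\ge1$, $C:\{0,1\}^n\to\{0,1\}^m$, $V:\{0,1\}^m\times\{0,1\}^\ell\to\{0,1\}$, $\varepsilon\in(0,1/25]$, $\alpha>1$, $p_H,p_{UH}\in[0,1]$ with $p_H\in[g_H\pm\frac45\sqrt\varepsilon]$ and $p_{UH}\in[g_{UH}\pm10\sqrt\varepsilon]$. Let $y_1,\dots,y_k\in\{0,1\}^m$ be arbitrary, $u:[k]\to\mathbb{Z}_{\ge0}\cup\{\infty\}$, $\mathcal{Y}\subseteq[k]$ and $w_i\in\{0,1\}^\ell$ ($i\in\mathcal{Y}$); let $\mathcal{L}=\{i\in[k]:2^{-(u(i)+1)\varepsilon}<\alpha2^{-m}\}$ and $\mathcal{H}=[k]\setminus\mathcal{L}$. Assume: (a) $|\mathcal{Y}|/k\in[g_{UY}\pm\varepsilon]$; (b) $V(y_i,w_i)=1$ for all $i\in\mathcal{Y}$; (c) $|\mathcal{H}|/k\in[p_{UH}\pm3\sqrt\varepsilon]$; (d) $\frac1k\sum_{i\in\mathcal{L}}2^m2^{-u(i)\varepsilon}\in[1-p_H\pm5\sqrt\varepsilon]$; (1) $\Pr_{y\leftarrow\mathcal{D}^C}[\mathcal{D}^C(y)\in(1\pm4\varepsilon)\alpha2^{-m}]\le\sqrt\varepsilon$; (2) for all $i$: $u'(i)=\infty\Rightarrow u(i)=\infty$; (3) for all $i$: $u(i)=\infty$ or $\mathcal{D}^C(y_i)>(1-\varepsilon/2)2^{-(u(i)+1)\varepsilon}$; (4) $\frac1k|\{i:y_i\in\mathcal{M}\}|<3\sqrt\varepsilon/\alpha$;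 (5) $|\mathcal{Y}'|/k\in[g_{UY}\pm\varepsilon]$; (6) $|\mathcal{H}'|/k\in[g_{UH}\pm3\sqrt\varepsilon]$; (7) $\frac1k\sum_{i\in\mathcal{L}'}2^m2^{-u'(i)\varepsilon}\in[1-g_H\pm5\sqrt\varepsilon]$; (8) $\frac1k\sum_{i\in\mathcal{L}'\cap\mathcal{Y}'}2^m2^{-u'(i)\varepsilon}\in[g_{YL}\pm5\sqrt\varepsilon]$. Then $\frac1k\sum_{i\in\mathcal{L}\cap\mathcal{Y}}2^m2^{-u(i)\varepsilon}\in[g_{YL}\pm112\sqrt\varepsilon\,\alpha]$.
   Context: $\mathcal{D}^C(y)=\Pr_{r\leftarrow\{0,1\}^n}[C(r)=y]$ for uniform $r$. For $y\in\{0,1\}^m$ write $y\in V$ if there is $w$ with $V(y,w)=1$. Let $t=\lceil n/\varepsilon\rceil$, $\mathcal{B}_j=\{y:\mathcal{D}^C(y)\in(2^{-(j+1)\varepsilon},2^{-j\varepsilon}]\}$ for $j\in\{0,\dots,t\}$, and $u'(y)=j$ if $y\in\mathcal{B}_j$, $u'(y)=\infty$ otherwise; conventions $2^{-\infty\varepsilon}=0$, $j<\infty$, $\infty+j=\infty$. $g_H=\Pr_{y\leftarrow\mathcal{D}^C}[\mathcal{D}^C(y)\ge\alpha2^{-m}]$, $g_{UH}=\Pr_{y\text{ uniform}}[\mathcal{D}^C(y)\ge\alpha2^{-m}]$, $g_{UY}=\Pr_{y\text{ uniform}}[y\in V]$, $g_{YL}=\Pr_{y\leftarrow\mathcal{D}^C}[\mathcal{D}^C(y)<\alpha2^{-m}\wedge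 y\in V]$. For the given $y_1,\dots,y_k$: $u'(i):=u'(y_i)$, $\mathcal{Y}'=\{i:y_i\in V\}$, $\mathcal{L}'=\{i:2^{-(u'(i)+1)\varepsilon}<\alpha2^{-m}\}$, $\mathcal{H}'=[k]\setminus\mathcal{L}'$, $\mathcal{M}=\{y:\mathcal{D}^C(y)\in(1\pm4\varepsilon)\alpha2^{-m}\}$. $[a\pm b]=[a-b,a+b]$, $(1\pm\delta)x=[(1-\delta)x,(1+\delta)x]$, $[k]=\{1,\dots,k\}$. *)

theory Defs
  imports "HOL-Analysis.Analysis" "HOL-Library.Extended_Nat"
begin

definition bits :: "nat \<Rightarrow> bool list set" where
  "bits n = {xs. length xs = n}"

definition DC :: "nat \<Rightarrow> (bool list \<Rightarrow> bool list) \<Rightarrow> bool list \<Rightarrow> real" where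
  "DC n C y = real (card {r \<in> bits n. C r = y}) / 2 ^ n"

definition inV :: "nat \<Rightarrow> (bool list \<Rightarrow> bool list \<Rightarrow> bool) \<Rightarrow> bool list \<Rightarrow> bool" where
  "inV l V y \<longleftrightarrow> (\<exists>w \<in> bits l. V y w)"

text \<open>2^{-u eps} with the convention 2^{-\<infinity> eps} = 0.\<close>
definition pw :: "real \<Rightarrow> enat \<Rightarrow> real" where
  "pw eps u = (case u of enat j \<Rightarrow> 2 powr (- (real j * eps)) | \<infinity> \<Rightarrow> 0)"

definition bucket :: "nat \<Rightarrow> (bool list \<Rightarrow> bool list) \<Rightarrow> real \<Rightarrow> nat \<Rightarrow> bool list set" where
  "bucket n C eps j = {y. DC n C y \<in> {2 powr (- (real (j+1) * eps))<..2 powr (- (real j * eps))}}"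

definition uprime :: "nat \<Rightarrow> (bool list \<Rightarrow> bool list) \<Rightarrow> real \<Rightarrow> bool list \<Rightarrow> enat" where
  "uprime n C eps y =
     (if \<exists>j \<le> nat \<lceil>real n / eps\<rceil>. y \<in> bucket n C eps j
      then enat (THE j. j \<le> nat \<lceil>real n / eps\<rceil> \<and> y \<in> bucket n C eps j)
      else \<infinity>)"

definition gH :: "nat \<Rightarrow> nat \<Rightarrow> (bool list \<Rightarrow> bool list) \<Rightarrow> real \<Rightarrow> real" where
  "gH n m C \<alpha> = (\<Sum>y \<in> {y \<in> bits m. DC n C y \<ge> \<alpha> * 2 powr (- real m)}. DC n C y)"

definition gUH :: "nat \<Rightarrow> nat \<Rightarrow> (bool list \<Rightarrow> bool list) \<Rightarrow> real \<Rightarrow> real" where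
  "gUH n m C \<alpha> = real (card {y \<in> bits m. DC n C y \<ge> \<alpha> * 2 powr (- real m)}) / 2 ^ m"

definition gUY :: "nat \<Rightarrow> nat \<Rightarrow> (bool list \<Rightarrow> bool list \<Rightarrow> bool) \<Rightarrow> real" where
  "gUY m l V = real (card {y \<in> bits m. inV l V y}) / 2 ^ m"

definition gYL :: "nat \<Rightarrow> nat \<Rightarrow> nat \<Rightarrow> (bool list \<Rightarrow> bool list) \<Rightarrow> (bool list \<Rightarrow> bool list \<Rightarrow> bool) \<Rightarrow> real \<Rightarrow> real" where
  "gYL n m l C V \<alpha> = (\<Sum>y \<in> {y \<in> bits m. DC n C y < \<alpha> * 2 powr (- real m) \<and> inV l V y}. DC n C y)"

definition Mset :: "nat \<Rightarrow> nat \<Rightarrow> (bool list \<Rightarrow> bool list) \<Rightarrow> real \<Rightarrow> real \<Rightarrow> bool list set" where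
  "Mset n m C eps \<alpha> = {y \<in> bits m. DC n C y \<in> {(1 - 4*eps) * \<alpha> * 2 powr (- real m) .. (1 + 4*eps) * \<alpha> * 2 powr (- real m)}}"

end

theory Submission
  imports Defs
begin

lemma pw_nonneg: "0 \<le> pw e x" by (cases x) (auto simp: pw_def)
lemma pw_suc: "pw e (x+1) = pw e x / 2 powr e"
proof (cases x)
  case (enat j)
  have "- (real (Suc j) * e) = - (real j * e) - e" by (simp add: algebra_simps)
  then show ?thesis using enat by (simp add: pw_def one_enat_def powr_diff)
qed (simp add: pw_def)

lemma q_bound: fixes e::real assumes "0 \<le> e" "e \<le> 1/2" shows "2 powr e \<le> 1 + 2*e"
proof -
  have l2: "ln (2::real) \<le> 1" using ln_le_minus_one[of 2] by simp
  have "2 powr e = exp (e * ln 2)" by (simp add: powr_def)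
  also have "\<dots> \<le> 1 + 2 * (e * ln 2)"
  proof (rule real_exp_bound_lemma)
    have "e * ln 2 \<le> e * 1" using assms l2 by (intro mult_left_mono) auto
    then show "e * ln 2 \<le> 1/2" using assms by simp
  qed (use assms in simp)
  also have "\<dots> \<le> 1 + 2*e" using assms l2 by (simp add: mult_left_le)
  finally show ?thesis .
qed

lemma bucket_unique:
  assumes "e > 0" "y \<in> bucket n C e j1" "y \<in> bucket n C e j2" shows "j1 = j2"
proof (rule ccontr)
  assume ne: "j1 \<noteq> j2"
  { fix a b assume ab: "a < b" "y \<in> bucket n C e a" "y \<in> bucket n C e b"
    have "2 powr (- (real b * e)) \<le> 2 powr (- (real (a+1) * e))"
      apply (rule powr_mono) using ab assms by (auto intro: mult_right_mono)
    moreover have "2 powr (- (real (a+1) * e)) < DC n C y" "DC n C y \<le> 2 powr (- (real b * e))"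
      using ab(2,3) unfolding bucket_def by auto
    ultimately have False by linarith }
  then show False using ne assms by (metis linorder_neqE_nat)
qed

lemma uprime_bucket:
  assumes "uprime n C e y = enat j" "e > 0"
  shows "2 powr (- (real (j+1) * e)) < DC n C y \<and> DC n C y \<le> 2 powr (- (real j * e))"
proof -
  have ex: "\<exists>j \<le> nat \<lceil>real n / e\<rceil>. y \<in> bucket n C e j"
    using assms(1) unfolding uprime_def by (auto split: if_splits)
  then obtain j0 where j0: "j0 \<le> nat \<lceil>real n / e\<rceil>" "y \<in> bucket n C e j0" by blast
  have "(THE j. j \<le> nat \<lceil>real n / e\<rceil> \<and> y \<in> bucket n C e j) = j0"
    apply (rule the_equality) using j0 bucket_unique[OF assms(2)] by auto
  then have "j = j0" using assms(1) ex unfolding uprime_def by auto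
  then show ?thesis using j0 unfolding bucket_def by auto
qed

lemma scale_in: assumes "(K::real) > 0" "(1/K)*S \<in> {a..b}" shows "a*K \<le> S" "S \<le> b*K"
  using assms by (auto simp: field_simps)
lemma scale_in2: assumes "(K::real) > 0" "S/K \<in> {a..b}" shows "a*K \<le> S" "S \<le> b*K"
  using assms by (auto simp: field_simps)

theorem mainTheorem9:
  fixes n m k l :: nat
    and C :: "bool list \<Rightarrow> bool list"
    and V :: "bool list \<Rightarrow> bool list \<Rightarrow> bool"
    and eps \<alpha> pH pUH :: real
    and y w :: "nat \<Rightarrow> bool list"
    and u :: "nat \<Rightarrow> enat"
    and Y :: "nat set"
  defines "L \<equiv> {i \<in> {1..k}. pw eps (u i + 1) < \<alpha> * 2 powr (- real m)}"
    and "H \<equiv> {1..k} - {i \<in> {1..k}. pw eps (u i + 1) < \<alpha> * 2 powr (- real m)}"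
    and "Y' \<equiv> {i \<in> {1..k}. inV l V (y i)}"
    and "L' \<equiv> {i \<in> {1..k}. pw eps (uprime n C eps (y i) + 1) < \<alpha> * 2 powr (- real m)}"
    and "H' \<equiv> {1..k} - {i \<in> {1..k}. pw eps (uprime n C eps (y i) + 1) < \<alpha> * 2 powr (- real m)}"
  assumes n: "n \<ge> 1" and m: "m \<ge> 1" and k: "k \<ge> 1"
    and C: "\<forall>r \<in> bits n. C r \<in> bits m"
    and eps: "0 < eps" "eps \<le> 1/25"
    and alpha: "\<alpha> > 1"
    and pH: "0 \<le> pH" "pH \<le> 1"
      "pH \<in> {gH n m C \<alpha> - 4/5 * sqrt eps .. gH n m C \<alpha> + 4/5 * sqrt eps}"
    and pUH: "0 \<le> pUH" "pUH \<le> 1"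
      "pUH \<in> {gUH n m C \<alpha> - 10 * sqrt eps .. gUH n m C \<alpha> + 10 * sqrt eps}"
    and y: "\<forall>i \<in> {1..k}. y i \<in> bits m"
    and Ysub: "Y \<subseteq> {1..k}"
    and w: "\<forall>i \<in> Y. w i \<in> bits l"
    and a: "real (card Y) / k \<in> {gUY m l V - eps .. gUY m l V + eps}"
    and b: "\<forall>i \<in> Y. V (y i) (w i)"
    and c: "real (card H) / k \<in> {pUH - 3 * sqrt eps .. pUH + 3 * sqrt eps}"
    and d: "(1 / k) * (\<Sum>i \<in> L. 2 ^ m * pw eps (u i))
              \<in> {1 - pH - 5 * sqrt eps .. 1 - pH + 5 * sqrt eps}"
    and h1: "(\<Sum>z \<in> Mset n m C eps \<alpha>. DC n C z) \<le> sqrt eps"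
    and h2: "\<forall>i \<in> {1..k}. uprime n C eps (y i) = \<infinity> \<longrightarrow> u i = \<infinity>"
    and h3: "\<forall>i \<in> {1..k}. u i = \<infinity> \<or> DC n C (y i) > (1 - eps / 2) * pw eps (u i + 1)"
    and h4: "real (card {i \<in> {1..k}. y i \<in> Mset n m C eps \<alpha>}) / k < 3 * sqrt eps / \<alpha>"
    and h5: "real (card Y') / k \<in> {gUY m l V - eps .. gUY m l V + eps}"
    and h6: "real (card H') / k \<in> {gUH n m C \<alpha> - 3 * sqrt eps .. gUH n m C \<alpha> + 3 * sqrt eps}"
    and h7: "(1 / k) * (\<Sum>i \<in> L'. 2 ^ m * pw eps (uprime n C eps (y i)))
              \<in> {1 - gH n m C \<alpha> - 5 * sqrt eps .. 1 - gH n m C \<alpha> + 5 * sqrt eps}"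
    and h8: "(1 / k) * (\<Sum>i \<in> L' \<inter> Y'. 2 ^ m * pw eps (uprime n C eps (y i)))
              \<in> {gYL n m l C V \<alpha> - 5 * sqrt eps .. gYL n m l C V \<alpha> + 5 * sqrt eps}"
  shows "(1 / k) * (\<Sum>i \<in> L \<inter> Y. 2 ^ m * pw eps (u i))
           \<in> {gYL n m l C V \<alpha> - 112 * sqrt eps * \<alpha> .. gYL n m l C V \<alpha> + 112 * sqrt eps * \<alpha>}"
proof -
  define q where "q = (2::real) powr eps"
  define P where "P = (2::real)^m"
  define A where "A i = P * pw eps (u i)" for i
  define B where "B i = P * pw eps (uprime n C eps (y i))" for i
  define s where "s = sqrt eps"
  define K where "K = real k"
  define M where "M = Mset n m C eps \<alpha>"
  define W where "W = s * K * \<alpha>"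
  define S8 where "S8 = (\<Sum>i \<in> L' \<inter> Y'. B i)"
  have Ppos: "P > 0" unfolding P_def by simp
  have q1: "1 \<le> q" unfolding q_def using eps by (simp add: ge_one_powr_ge_zero)
  have q2: "q \<le> 1 + 2*eps" unfolding q_def using eps q_bound by simp
  have Kpos: "K > 0" unfolding K_def using k by simp
  have s0: "0 < s" unfolding s_def using eps by simp
  have ss: "eps = s * s" unfolding s_def using eps by simp
  have s5: "s \<le> 1/5" unfolding s_def using eps real_sqrt_le_mono[of eps "1/25"]
    by (simp add: real_sqrt_divide)
  have es: "eps \<le> s/5" using ss s5 s0 by (simp add: mult_left_mono)
  have W0: "W \<ge> 0" unfolding W_def using s0 Kpos alpha by simp
  have sKW: "s * K \<le> W" unfolding W_def using s0 Kpos alpha by simp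
  have thr: "\<alpha> * 2 powr (- real m) = \<alpha> / P"
    unfolding P_def by (simp add: powr_minus powr_realpow divide_inverse)
  have Lchar: "(pw eps (x + 1) < \<alpha> * 2 powr (- real m)) = (P * pw eps x < q * \<alpha>)" for x
    unfolding thr pw_suc q_def[symmetric] using Ppos q1 by (simp add: field_simps)
  have LA: "L = {i\<in>{1..k}. A i < q*\<alpha>}" unfolding L_def A_def Lchar ..
  have LB: "L' = {i\<in>{1..k}. B i < q*\<alpha>}" unfolding L'_def B_def Lchar ..
  have HL: "H = {1..k} - L" unfolding H_def L_def ..
  have HL': "H' = {1..k} - L'" unfolding H'_def L'_def ..
  have Anon: "0 \<le> A i" for i unfolding A_def using Ppos pw_nonneg[of eps "u i"] by simp
  have Bnon: "0 \<le> B i" for i unfolding B_def using Ppos pw_nonneg[of eps] by simp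
  have key: "A i \<le> (1+3*eps) * B i \<and> (B i < q*\<alpha> \<and> \<not> A i < q*\<alpha> \<longrightarrow> y i \<in> M)"
    if i: "i \<in> {1..k}" for i
  proof (cases "u i")
      case infinity
      then have "A i = 0" unfolding A_def by (simp add: pw_def)
      then show ?thesis using Bnon[of i] q1 alpha eps by (auto intro: mult_nonneg_nonneg)
    next
      case (enat v)
      have "uprime n C eps (y i) \<noteq> \<infinity>" using h2 i enat by auto
      then obtain j where j: "uprime n C eps (y i) = enat j" by (cases "uprime n C eps (y i)") auto
      define D where "D = P * DC n C (y i)"
      have bk: "2 powr (- (real (j+1) * eps)) < DC n C (y i)" "DC n C (y i) \<le> 2 powr (- (real j * eps))"
        using uprime_bucket[OF j] eps by auto
      have Bj: "B i = P * 2 powr (- (real j * eps))" unfolding B_def j pw_def by simp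
      have DB: "D \<le> B i" unfolding D_def Bj using bk Ppos by simp
      have pwj1: "pw eps (enat j + 1) = 2 powr (- (real (j+1) * eps))"
        by (simp add: pw_def one_enat_def)
      have "P * pw eps (enat j + 1) = B i / q" unfolding B_def j pw_suc q_def by simp
      then have BD: "B i / q < D" unfolding D_def using bk(1) Ppos pwj1 by (metis mult_strict_left_mono)
      have h3i: "DC n C (y i) > (1 - eps / 2) * pw eps (u i + 1)" using h3 i enat by (metis enat.distinct(1))
      have "P * ((1 - eps / 2) * pw eps (u i + 1)) = (1 - eps/2) * (A i / q)"
        unfolding A_def pw_suc q_def by (simp add: algebra_simps)
      then have AD: "(1 - eps/2) * (A i / q) < D" unfolding D_def using h3i Ppos
        by (metis mult_strict_left_mono)
      have e2: "0 < 1 - eps/2" using eps by simp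
      have qpos: "q > 0" using q1 by simp
      have AD2: "(1 - eps/2) * A i < q * D" using AD qpos by (simp add: field_simps)
      have "q * D \<le> q * B i" using DB qpos by simp
      also have "\<dots> \<le> ((1+3*eps) * (1 - eps/2)) * B i"
      proof (rule mult_right_mono[OF _ Bnon])
        have "(1+3*eps) * (1 - eps/2) = 1 + 2*eps + eps * (1/2 - 3/2 * eps)" by (simp add: algebra_simps)
        moreover have "eps * (1/2 - 3/2 * eps) \<ge> 0" using eps by simp
        ultimately show "q \<le> (1+3*eps) * (1 - eps/2)" using q2 by linarith
      qed
      finally have "(1 - eps/2) * A i \<le> (1 - eps/2) * ((1+3*eps) * B i)" using AD2 by (simp add: algebra_simps)
      then have P1: "A i \<le> (1+3*eps) * B i" using e2 by simp
      have P2: "y i \<in> M" if "B i < q*\<alpha>" "\<not> A i < q*\<alpha>"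
      proof -
        have up: "D < (1 + 4*eps) * \<alpha>"
        proof -
          have "q * \<alpha> \<le> (1 + 2*eps) * \<alpha>" using q2 alpha by simp
          also have "\<dots> \<le> (1 + 4*eps) * \<alpha>" using eps alpha by simp
          finally show ?thesis using DB that(1) by linarith
        qed
        have lo: "(1 - 4*eps) * \<alpha> < D"
        proof -
          have "q*\<alpha> \<le> A i" using that(2) by simp
          then have "\<alpha> \<le> A i / q" using qpos by (simp add: field_simps)
          then have "(1 - eps/2) * \<alpha> \<le> (1 - eps/2) * (A i / q)" using e2 by (intro mult_left_mono) auto
          moreover have "(1 - 4*eps) * \<alpha> \<le> (1 - eps/2) * \<alpha>" using eps alpha by simp
          ultimately show ?thesis using AD by linarith
        qed
        have yb: "y i \<in> bits m" using y i by auto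
        have "DC n C (y i) = D / P" unfolding D_def using Ppos by simp
        moreover have "(1 - 4*eps) * \<alpha> * 2 powr (- real m) = (1 - 4*eps) * \<alpha> / P"
          "(1 + 4*eps) * \<alpha> * 2 powr (- real m) = (1 + 4*eps) * \<alpha> / P"
          using thr by (simp_all add: mult.assoc)
        ultimately show ?thesis unfolding M_def Mset_def using yb up lo Ppos
          by (auto simp: divide_right_mono less_imp_le)
      qed
      show ?thesis using P1 P2 by blast
    qed
  have finL: "finite L" "finite L'" "finite Y" "finite Y'" "finite H" "finite H'"
    unfolding LA LB HL HL' Y'_def using Ysub finite_subset by auto
  have LsubK: "L \<subseteq> {1..k}" "L' \<subseteq> {1..k}" unfolding LA LB by auto
  have YY': "Y \<subseteq> Y'" unfolding Y'_def inV_def using Ysub b w by auto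
  have qa0: "0 \<le> q * \<alpha>" using q1 alpha by simp
  have q2': "q \<le> 2" using q2 eps by simp
  have a1: "(gUY m l V - eps) * K \<le> real (card Y)" using scale_in2(1)[OF Kpos a[folded K_def]] .
  have h5': "real (card Y') \<le> (gUY m l V + eps) * K" using scale_in2(2)[OF Kpos h5[folded K_def]] .
  have cYY: "real (card (Y' - Y)) \<le> 2 * eps * K"
  proof -
    have "card (Y' - Y) = card Y' - card Y" using card_Diff_subset[OF finL(3) YY'] .
    moreover have "card Y \<le> card Y'" using card_mono[OF finL(4) YY'] .
    ultimately have "real (card (Y' - Y)) = real (card Y') - real (card Y)" by simp
    then show ?thesis using a1 h5' by (simp add: algebra_simps)
  qed
  have cL'L: "real (card (L' - L)) \<le> 3 * s * K"
  proof -
    have sub: "L' - L \<subseteq> {i \<in> {1..k}. y i \<in> M}" using key unfolding LA LB by auto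
    have "card (L' - L) \<le> card {i \<in> {1..k}. y i \<in> M}" by (rule card_mono[OF _ sub]) simp
    moreover have "real (card {i \<in> {1..k}. y i \<in> M}) < 3 * s / \<alpha> * K"
      using h4[folded K_def M_def s_def] Kpos by (simp add: field_simps)
    moreover have "3 * s / \<alpha> * K \<le> 3 * s * K" using alpha s0 Kpos by (simp add: field_simps)
    ultimately show ?thesis by linarith
  qed
  have cLL': "real (card (L - L')) \<le> 19 * s * K"
  proof -
    have cH: "(pUH - 3 * s) * K \<le> real (card H)" using scale_in2(1)[OF Kpos c[folded K_def s_def]] .
    have cH': "real (card H') \<le> (gUH n m C \<alpha> + 3 * s) * K" using scale_in2(2)[OF Kpos h6[folded K_def s_def]] .
    have pU: "gUH n m C \<alpha> - 10 * s \<le> pUH" using pUH(3) unfolding s_def by simp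
    have eH: "real (card H) = K - real (card L)"
      unfolding HL K_def using card_Diff_subset[OF finL(1) LsubK(1)] card_mono[OF _ LsubK(1)] by simp
    have eH': "real (card H') = K - real (card L')"
      unfolding HL' K_def using card_Diff_subset[OF finL(2) LsubK(2)] card_mono[OF _ LsubK(2)] by simp
    have e1: "card L = card (L \<inter> L') + card (L - L')" using card_Int_Diff[OF finL(1)] .
    have e2: "card L' = card (L' \<inter> L) + card (L' - L)" using card_Int_Diff[OF finL(2)] .
    have "L' \<inter> L = L \<inter> L'" by blast
    then have "real (card (L - L')) = real (card L) - real (card L') + real (card (L' - L))"
      using e1 e2 by simp
    moreover have "(pUH - 3 * s) * K \<ge> (gUH n m C \<alpha> - 13 * s) * K"
      using pU Kpos by (intro mult_right_mono) auto
    ultimately show ?thesis using cH cH' eH eH' cL'L by (simp add: algebra_simps)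
  qed
  have Kqa: "K * (q * \<alpha>) \<le> 2 * K * \<alpha>" using q2' Kpos alpha by simp
  have W1: "real (card (L - L')) * (q * \<alpha>) \<le> 38 * W"
  proof -
    have "real (card (L - L')) * (q * \<alpha>) \<le> (19 * s * K) * (2 * \<alpha>)"
      using cLL' q2' alpha s0 Kpos qa0 by (intro mult_mono) auto
    then show ?thesis unfolding W_def by (simp add: algebra_simps)
  qed
  have W2: "real (card (Y' - Y)) * (q * \<alpha>) \<le> 4/5 * W"
  proof -
    have "real (card (Y' - Y)) * (q * \<alpha>) \<le> (2 * (s/5) * K) * (2 * \<alpha>)"
    proof (rule mult_mono)
      have "2 * eps * K \<le> 2 * (s/5) * K" using es Kpos by simp
      then show "real (card (Y' - Y)) \<le> 2 * (s/5) * K" using cYY by linarith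
    qed (use q2' alpha s0 Kpos qa0 in auto)
    then show ?thesis unfolding W_def by (simp add: algebra_simps)
  qed
  have W3: "3 * eps * (K * (q * \<alpha>)) \<le> 6/5 * W"
  proof -
    have "3 * eps * (K * (q * \<alpha>)) \<le> (3 * (s/5)) * (2 * K * \<alpha>)"
      apply (rule mult_mono) using es Kqa Kpos qa0 eps by auto
    then show ?thesis unfolding W_def by (simp add: algebra_simps)
  qed
  have W3': "eps * (K * (q * \<alpha>)) \<le> 2/5 * W"
  proof -
    have "eps * (K * (q * \<alpha>)) \<le> (s/5) * (2 * K * \<alpha>)"
      apply (rule mult_mono) using es Kqa Kpos qa0 eps s0 by auto
    then show ?thesis unfolding W_def by (simp add: algebra_simps)
  qed
  have AL: "\<And>i. i \<in> L \<Longrightarrow> A i \<le> q * \<alpha>" unfolding LA by auto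
  have BL: "\<And>i. i \<in> L' \<Longrightarrow> B i \<le> q * \<alpha>" unfolding LB by auto
  have sLL': "(\<Sum>i \<in> L - L'. A i) \<le> 38 * W"
    using sum_bounded_above[of "L - L'" A "q*\<alpha>"] AL W1 by force
  have AB: "\<And>i. i \<in> L \<Longrightarrow> A i \<le> (1+3*eps) * B i" using key LsubK by blast
  have S8K: "S8 \<le> K * (q * \<alpha>)"
  proof -
    have "S8 \<le> real (card (L' \<inter> Y')) * (q * \<alpha>)" unfolding S8_def
      using sum_bounded_above[of "L' \<inter> Y'" B "q*\<alpha>"] BL by force
    also have "\<dots> \<le> K * (q * \<alpha>)" unfolding K_def
      using card_mono[of "{1..k}" "L' \<inter> Y'"] LsubK qa0 by (intro mult_right_mono) auto
    finally show ?thesis .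
  qed
  have S8b: "(gYL n m l C V \<alpha> - 5 * s) * K \<le> S8" "S8 \<le> (gYL n m l C V \<alpha> + 5 * s) * K"
    using scale_in[OF Kpos h8[folded K_def s_def]] unfolding S8_def B_def P_def by auto
  have qe0: "0 \<le> 1 + 3 * eps" using eps by simp
  have sumAB: "(\<Sum>i \<in> X. A i) \<le> (1+3*eps) * (\<Sum>i \<in> Z. B i)" if "X \<subseteq> L" "X \<subseteq> Z" "finite Z" for X Z
  proof -
    have "(\<Sum>i \<in> X. A i) \<le> (\<Sum>i \<in> X. (1+3*eps) * B i)" using that AB by (intro sum_mono) auto
    also have "\<dots> \<le> (\<Sum>i \<in> Z. (1+3*eps) * B i)"
      using that Bnon qe0 by (intro sum_mono2) auto
    finally show ?thesis by (simp add: sum_distrib_left)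
  qed
  have finLY: "finite (L' \<inter> Y')" "finite (L' - Y)" using finL by auto
  define S where "S = (\<Sum>i \<in> L \<inter> Y. A i)"
  have up: "S \<le> gYL n m l C V \<alpha> * K + 45 * W"
  proof -
    have "S = (\<Sum>i \<in> L \<inter> Y \<inter> L'. A i) + (\<Sum>i \<in> L \<inter> Y - L'. A i)"
      unfolding S_def using sum.Int_Diff finL by blast
    moreover have "(\<Sum>i \<in> L \<inter> Y \<inter> L'. A i) \<le> (1+3*eps) * S8"
      unfolding S8_def using YY' finLY by (intro sumAB) auto
    moreover have "(\<Sum>i \<in> L \<inter> Y - L'. A i) \<le> (\<Sum>i \<in> L - L'. A i)"
      using finL Anon by (intro sum_mono2) auto
    moreover have "eps * S8 \<le> 2/5 * W"
    proof -
      have "eps * S8 \<le> eps * (K * (q * \<alpha>))" using S8K eps by simp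
      then show ?thesis using W3' by linarith
    qed
    moreover have "S8 \<le> gYL n m l C V \<alpha> * K + 5 * W"
    proof -
      have "(gYL n m l C V \<alpha> + 5 * s) * K = gYL n m l C V \<alpha> * K + 5 * (s * K)" by (simp add: algebra_simps)
      then show ?thesis using S8b(2) sKW by linarith
    qed
    moreover have "(1+3*eps) * S8 = S8 + 3 * (eps * S8)" by (simp add: algebra_simps)
    ultimately show ?thesis using sLL' W0 by linarith
  qed
  have lo: "gYL n m l C V \<alpha> * K - 56 * W \<le> S"
  proof -
    have e1: "(\<Sum>i \<in> L. A i) = S + (\<Sum>i \<in> L - Y. A i)"
      unfolding S_def using sum.Int_Diff finL by blast
    have e2: "(\<Sum>i \<in> L - Y. A i) = (\<Sum>i \<in> (L - Y) \<inter> L'. A i) + (\<Sum>i \<in> L - Y - L'. A i)"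
      using sum.Int_Diff finL by blast
    have i1: "(\<Sum>i \<in> (L - Y) \<inter> L'. A i) \<le> (1+3*eps) * (\<Sum>i \<in> L' - Y. B i)"
      using finLY by (intro sumAB) auto
    have i2: "(\<Sum>i \<in> L - Y - L'. A i) \<le> (\<Sum>i \<in> L - L'. A i)"
      using finL Anon by (intro sum_mono2) auto
    have e3: "(\<Sum>i \<in> L'. B i) = (\<Sum>i \<in> L' \<inter> Y. B i) + (\<Sum>i \<in> L' - Y. B i)"
      using sum.Int_Diff finL by blast
    have e4: "S8 = (\<Sum>i \<in> L' \<inter> Y' \<inter> Y. B i) + (\<Sum>i \<in> L' \<inter> Y' - Y. B i)"
      unfolding S8_def using sum.Int_Diff finLY by blast
    have e5: "L' \<inter> Y' \<inter> Y = L' \<inter> Y" using YY' by blast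
    have i3: "(\<Sum>i \<in> L' \<inter> Y' - Y. B i) \<le> 4/5 * W"
    proof -
      have "(\<Sum>i \<in> L' \<inter> Y' - Y. B i) \<le> real (card (L' \<inter> Y' - Y)) * (q * \<alpha>)"
        using sum_bounded_above[of "L' \<inter> Y' - Y" B "q*\<alpha>"] BL by force
      also have "\<dots> \<le> real (card (Y' - Y)) * (q * \<alpha>)"
        using card_mono[of "Y' - Y" "L' \<inter> Y' - Y"] finL qa0 by (intro mult_right_mono) auto
      finally show ?thesis using W2 by linarith
    qed
    have SL'K: "(\<Sum>i \<in> L'. B i) \<le> K * (q * \<alpha>)"
    proof -
      have "(\<Sum>i \<in> L'. B i) \<le> real (card L') * (q * \<alpha>)"
        using sum_bounded_above[of "L'" B "q*\<alpha>"] BL by force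
      also have "\<dots> \<le> K * (q * \<alpha>)" unfolding K_def
        using card_mono[of "{1..k}" "L'"] LsubK qa0 by (intro mult_right_mono) auto
      finally show ?thesis .
    qed
    have i4: "(\<Sum>i \<in> L' - Y. B i) \<le> (\<Sum>i \<in> L'. B i)" using finL Bnon by (intro sum_mono2) auto
    have i5: "eps * (\<Sum>i \<in> L' - Y. B i) \<le> 2/5 * W"
    proof -
      have "eps * (\<Sum>i \<in> L' - Y. B i) \<le> eps * (K * (q * \<alpha>))" using i4 SL'K eps by simp
      then show ?thesis using W3' by linarith
    qed
    have dL: "(1 - pH - 5 * s) * K \<le> (\<Sum>i \<in> L. A i)"
      using scale_in(1)[OF Kpos d[folded K_def s_def]] unfolding A_def P_def by auto
    have h7': "(\<Sum>i \<in> L'. B i) \<le> (1 - gH n m C \<alpha> + 5 * s) * K"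
      using scale_in(2)[OF Kpos h7[folded K_def s_def]] unfolding B_def P_def by auto
    have pHg: "pH * K \<le> (gH n m C \<alpha> + 4/5 * s) * K" using pH(3) Kpos unfolding s_def by simp
    have sW: "s * K \<le> W" using sKW .
    have e4': "S8 = (\<Sum>i \<in> L' \<inter> Y. B i) + (\<Sum>i \<in> L' \<inter> Y' - Y. B i)" using e4 e5 by simp
    have x1: "(1 - pH - 5 * s) * K = K - pH * K - 5 * (s * K)" by (simp add: algebra_simps)
    have x2: "(1 - gH n m C \<alpha> + 5 * s) * K = K - gH n m C \<alpha> * K + 5 * (s * K)" by (simp add: algebra_simps)
    have x3: "(gH n m C \<alpha> + 4 / 5 * s) * K = gH n m C \<alpha> * K + 4/5 * (s * K)" by (simp add: algebra_simps)
    have x4: "(gYL n m l C V \<alpha> - 5 * s) * K = gYL n m l C V \<alpha> * K - 5 * (s * K)" by (simp add: algebra_simps)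
    have x5: "(1 + 3 * eps) * (\<Sum>i \<in> L' - Y. B i) = (\<Sum>i \<in> L' - Y. B i) + 3 * (eps * (\<Sum>i \<in> L' - Y. B i))"
      by (simp add: algebra_simps)
    show ?thesis using e1 e2 i1 i2 e3 e4' i3 i5 dL h7' pHg sW sLL' S8b(1) W0 x1 x2 x3 x4 x5
      by linarith
  qed
  have goalS: "(\<Sum>i \<in> L \<inter> Y. 2 ^ m * pw eps (u i)) = S" unfolding S_def A_def P_def ..
  have fin: "(1 / K) * S \<in> {gYL n m l C V \<alpha> - 112 * s * \<alpha> .. gYL n m l C V \<alpha> + 112 * s * \<alpha>}"
  proof -
    have "W = (s * \<alpha>) * K" unfolding W_def by simp
    then have "(gYL n m l C V \<alpha> - 112 * s * \<alpha>) * K \<le> S" "S \<le> (gYL n m l C V \<alpha> + 112 * s * \<alpha>) * K"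
      using up lo W0 by (simp_all add: algebra_simps)
    then show ?thesis using Kpos by (simp add: field_simps)
  qed
  show ?thesis using fin unfolding goalS K_def s_def .
qed


end
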